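(* Let $(\Omega,d)$ be a compact metric space, $F$ a $k$-iterated contraction system on $\Omega$ with contraction ratio $\theta\in(0,1)$ and attractor $\Omega$, and $A:\Omega\to\mathbb{R}$ Lipschitz. Let $\mathscr{L}$ be the transfer operator, $\rho$ its spectral radius on $C(\Omega)$, $h$ a strictly positive Lipschitz function with $\mathscr{L}h=\rho h$, $\mathbb{P}\varphi=\mathscr{L}(h\varphi)/(\rho h)$ the normalized operator and $\mathbb{P}^*$ its dual. Let $C>0$, $\lambda\in(0,1)$ be constants, depending only on $\theta,\operatorname{Lip}(A),\operatorname{diam}\Omega$, such that $W_1((\mathbb{P}^* )^n\mu,(\mathbb{P}^* )^n\nu)\le C\lambda^nW_1(\mu,\nu)$ for all $n\in\mathbb{N}$ and all Borel probability measures $\mu,\nu$ on $\Omega$, and let $\mu$ be the (unique) Borel probability measure with $\mathbb{P}^*\mu=\mu$. Then for every Lipschitz $\zeta:\Omega\to\mathbb{R}$ with $\int\zeta\,d\mu=0$ and every $n\in\mathbb{N}$, \[\|\mathbb{P}^n\zeta\|_\infty+\operatorname{Lip}(\mathbb{P}^n\zeta)\le(1+\operatorname{diam}\Omega)\,C\,\operatorname{Lip}(\zeta)\,\lambda^n.\] Moreover, every strictly positive Lipschitz function $g$ with $\mathscr{L}g=\rho g$ is a constant multiple of $h$.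
   Context: A $k$-multiset is an unordered list of $k$ elements with repetitions allowed; sums over it count multiplicities. A $k$-iterated contraction system (ICS) on $\Omega$ with contraction ratio $\theta$ assigns to each $x\in\Omega$ a $k$-multiset $F(x)$ of elements of $\Omega$ such that for all $x,y$ there are enumerations $F(x)=\{x_1,\dots,x_k\}$, $F(y)=\{y_1,\dots,y_k\}$ with $d(x_i,y_i)\le\theta d(x,y)$; attractor $\Omega$ means $\Omega$ is the union of the underlying sets of the $F(x)$. Transfer operator: $\mathscr{L}f(x)=\sum_{y\in F(x)}e^{A(y)}f(y)$. The dual $\mathbb{P}^*$ acts on measures by $\int\varphi\,d(\mathbb{P}^*\mu)=\int\mathbb{P}\varphi\,d\mu$. $W_1$ is the 1-Wasserstein distance: $W_1(\mu,\nu)=\inf_\pi\int d(x,y)\,d\pi$ over couplings $\pi$ of $\mu,\nu$. $\operatorname{Lip}$ denotes the Lipschitz constant. *)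

theory Defs
  imports "HOL-Probability.Probability" "HOL-Library.Multiset"
begin

definition ICS :: "'a::metric_space set \<Rightarrow> nat \<Rightarrow> real \<Rightarrow> ('a \<Rightarrow> 'a multiset) \<Rightarrow> bool" where
  "ICS \<Omega> k \<theta> F \<longleftrightarrow>
     (\<forall>x\<in>\<Omega>. size (F x) = k \<and> set_mset (F x) \<subseteq> \<Omega>) \<and>
     (\<forall>x\<in>\<Omega>. \<forall>y\<in>\<Omega>. \<exists>xs ys. mset xs = F x \<and> mset ys = F y \<and>
          (\<forall>i<k. dist (xs ! i) (ys ! i) \<le> \<theta> * dist x y))"

definition has_attractor :: "'a set \<Rightarrow> ('a \<Rightarrow> 'a multiset) \<Rightarrow> bool" where
  "has_attractor \<Omega> F \<longleftrightarrow> \<Omega> = (\<Union>x\<in>\<Omega>. set_mset (F x))"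

definition transfer :: "('a \<Rightarrow> 'a multiset) \<Rightarrow> ('a \<Rightarrow> real) \<Rightarrow> ('a \<Rightarrow> real) \<Rightarrow> ('a \<Rightarrow> real)" where
  "transfer F A f x = (\<Sum>y\<in>#F x. exp (A y) * f y)"

definition supnorm :: "'a set \<Rightarrow> ('a \<Rightarrow> real) \<Rightarrow> real" where
  "supnorm \<Omega> f = Sup ((\<lambda>x. \<bar>f x\<bar>) ` \<Omega>)"

definition Lip :: "'a::metric_space set \<Rightarrow> ('a \<Rightarrow> real) \<Rightarrow> real" where
  "Lip \<Omega> f = Inf {L. L-lipschitz_on \<Omega> f}"

definition opnormC :: "'a::topological_space set \<Rightarrow> (('a \<Rightarrow> real) \<Rightarrow> ('a \<Rightarrow> real)) \<Rightarrow> real" where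
  "opnormC \<Omega> T = Sup {supnorm \<Omega> (T f) | f. continuous_on \<Omega> f \<and> supnorm \<Omega> f \<le> 1}"

definition spectral_radiusC :: "'a::topological_space set \<Rightarrow> (('a \<Rightarrow> real) \<Rightarrow> ('a \<Rightarrow> real)) \<Rightarrow> real" where
  "spectral_radiusC \<Omega> T = lim (\<lambda>n. opnormC \<Omega> (T ^^ n) powr (1 / real n))"

definition Pnorm :: "('a \<Rightarrow> 'a multiset) \<Rightarrow> ('a \<Rightarrow> real) \<Rightarrow> real \<Rightarrow> ('a \<Rightarrow> real) \<Rightarrow> ('a \<Rightarrow> real) \<Rightarrow> ('a \<Rightarrow> real)" where
  "Pnorm F A \<rho> h \<phi> x = transfer F A (\<lambda>y. h y * \<phi> y) x / (\<rho> * h x)"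

definition borelOn :: "'a::topological_space set \<Rightarrow> 'a measure" where
  "borelOn \<Omega> = restrict_space borel \<Omega>"

definition prob_on :: "'a::topological_space set \<Rightarrow> 'a measure \<Rightarrow> bool" where
  "prob_on \<Omega> M \<longleftrightarrow> prob_space M \<and> sets M = sets (borelOn \<Omega>)"

text \<open>Dual operator on measures:  (P* mu)(B) = integral of P(indicator B) d mu,
  i.e. integral phi d(P* mu) = integral (P phi) d mu.\<close>
definition Pdual :: "'a::topological_space set \<Rightarrow> (('a \<Rightarrow> real) \<Rightarrow> ('a \<Rightarrow> real)) \<Rightarrow> 'a measure \<Rightarrow> 'a measure" where
  "Pdual \<Omega> P M = measure_of \<Omega> (sets (borelOn \<Omega>))
      (\<lambda>B. \<integral>\<^sup>+ x. ennreal (P (indicator B) x) \<partial>M)"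

definition couplings :: "'a::metric_space set \<Rightarrow> 'a measure \<Rightarrow> 'a measure \<Rightarrow> ('a \<times> 'a) measure set" where
  "couplings \<Omega> M N = {\<pi>. prob_space \<pi> \<and> sets \<pi> = sets (borelOn \<Omega> \<Otimes>\<^sub>M borelOn \<Omega>) \<and>
      distr \<pi> (borelOn \<Omega>) fst = M \<and> distr \<pi> (borelOn \<Omega>) snd = N}"

definition W1 :: "'a::metric_space set \<Rightarrow> 'a measure \<Rightarrow> 'a measure \<Rightarrow> real" where
  "W1 \<Omega> M N = Inf ((\<lambda>\<pi>. \<integral>p. dist (fst p) (snd p) \<partial>\<pi>) ` couplings \<Omega> M N)"

end

theory Submission
  imports Defs
begin


lemma borelOn_space[simp]: "space (borelOn \<Omega>) = \<Omega>"
  by (simp add: borelOn_def space_restrict_space)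

lemma borelOn_sets_iff:
  fixes \<Omega> :: "'a::metric_space set"
  assumes "compact \<Omega>"
  shows "B \<in> sets (borelOn \<Omega>) \<longleftrightarrow> B \<subseteq> \<Omega> \<and> B \<in> sets borel"
proof -
  have "closed \<Omega>" using assms by (rule compact_imp_closed)
  then have "\<Omega> \<in> sets borel" by (rule borel_closed)
  then have "\<Omega> \<inter> space borel \<in> sets borel" by simp
  then show ?thesis unfolding borelOn_def by (rule sets_restrict_space_iff)
qed

lemma cont_meas: "continuous_on \<Omega> f \<Longrightarrow> f \<in> borel_measurable (borelOn \<Omega>)"
  unfolding borelOn_def by (rule borel_measurable_continuous_on_restrict)

lemma dist_meas:
  fixes \<Omega> :: "'a::metric_space set"
  assumes cpt: "compact \<Omega>"
  shows "(\<lambda>p. dist (fst p) (snd p)) \<in> borel_measurable (borelOn \<Omega> \<Otimes>\<^sub>M borelOn \<Omega>)"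
proof -
  have "\<forall>n. \<exists>K. finite K \<and> \<Omega> \<subseteq> (\<Union>x\<in>K. ball x (inverse (real (Suc n))))"
    using cpt unfolding compact_eq_totally_bounded by auto
  then obtain K where K: "\<And>n. finite (K n)" "\<And>n. \<Omega> \<subseteq> (\<Union>x\<in>K n. ball x (inverse (real (Suc n))))"
    by metis
  define D where "D = (\<Union>n. K n)"
  have cD: "countable D" unfolding D_def using K(1) by (simp add: countable_finite)
  have m1: "(\<lambda>p. dist (fst p) d + dist d (snd p)) \<in> borel_measurable (borelOn \<Omega> \<Otimes>\<^sub>M borelOn \<Omega>)" for d
  proof -
    have a: "(\<lambda>a. dist a d) \<in> borel_measurable (borelOn \<Omega>)"
      by (intro cont_meas continuous_intros)
    have b: "(\<lambda>a. dist d a) \<in> borel_measurable (borelOn \<Omega>)"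
      by (intro cont_meas continuous_intros)
    have "(\<lambda>p. dist (fst p) d) \<in> borel_measurable (borelOn \<Omega> \<Otimes>\<^sub>M borelOn \<Omega>)"
      by (rule measurable_compose[OF measurable_fst a])
    moreover have "(\<lambda>p. dist d (snd p)) \<in> borel_measurable (borelOn \<Omega> \<Otimes>\<^sub>M borelOn \<Omega>)"
      by (rule measurable_compose[OF measurable_snd b])
    ultimately show ?thesis by (rule borel_measurable_add)
  qed
  have m: "(\<lambda>p. INF d\<in>D. dist (fst p) d + dist d (snd p)) \<in> borel_measurable (borelOn \<Omega> \<Otimes>\<^sub>M borelOn \<Omega>)"
    by (rule borel_measurable_cINF_real[OF cD m1])
  have eq: "dist (fst p) (snd p) = (INF d\<in>D. dist (fst p) d + dist d (snd p))"
    if p: "p \<in> space (borelOn \<Omega> \<Otimes>\<^sub>M borelOn \<Omega>)" for p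
  proof -
    obtain a b where ab: "p = (a, b)" "a \<in> \<Omega>" "b \<in> \<Omega>" using p by (cases p) (auto simp: space_pair_measure)
    have bdd: "bdd_below ((\<lambda>d. dist a d + dist d b) ` D)" by (rule bdd_belowI[of _ 0]) auto
    have ne: "D \<noteq> {}" using K(2)[of 0] ab(2) unfolding D_def by blast
    have ge: "dist a b \<le> (INF d\<in>D. dist a d + dist d b)"
      using ne by (intro cINF_greatest) (auto intro: dist_triangle)
    have le: "(INF d\<in>D. dist a d + dist d b) \<le> dist a b"
    proof (rule field_le_epsilon)
      fix e :: real assume e: "0 < e"
      obtain m :: nat where m: "0 < m" "inverse (real m) < e / 2" using ex_inverse_of_nat_less[of "e/2"] e by auto
      define n where "n = m - 1"
      have "Suc n = m" using m(1) unfolding n_def by simp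
      then have n: "inverse (real (Suc n)) < e / 2" using m(2) by metis
      obtain d where d: "d \<in> K n" "dist d a < inverse (real (Suc n))" using K(2)[of n] ab(2) by auto
      have dD: "d \<in> D" using d(1) unfolding D_def by auto
      have "(INF d\<in>D. dist a d + dist d b) \<le> dist a d + dist d b"
        by (rule cINF_lower[OF bdd dD])
      also have "\<dots> \<le> dist a d + (dist d a + dist a b)"
        using dist_triangle[of d b a] by simp
      also have "\<dots> \<le> dist a b + e"
      proof -
        have "dist a d < e / 2" using d(2) n dist_commute[of d a] by linarith
        then show ?thesis using dist_commute[of d a] by linarith
      qed
      finally show "(INF d\<in>D. dist a d + dist d b) \<le> dist a b + e" .
    qed
    show ?thesis using ge le ab by simp
  qed
  show ?thesis using m by (subst measurable_cong[OF eq]) auto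
qed

lemma nn_fin:
  fixes \<Omega> :: "'a::metric_space set"
  assumes cpt: "compact \<Omega>" and sets: "sets \<nu> = sets (borelOn \<Omega>)"
    and S: "finite S" "S \<subseteq> \<Omega>" and null: "emeasure \<nu> (\<Omega> - S) = 0"
  shows "(\<integral>\<^sup>+x. f x \<partial>\<nu>) = (\<Sum>y\<in>S. f y * emeasure \<nu> {y})"
proof -
  have sp: "space \<nu> = \<Omega>" using sets_eq_imp_space_eq[OF sets] by simp
  have single: "{y} \<in> sets \<nu>" if "y \<in> \<Omega>" for y
    using that sets borelOn_sets_iff[OF cpt] by auto
  have diff: "\<Omega> - S \<in> sets \<nu>"
  proof -
    have "\<Omega> \<in> sets borel" using compact_imp_closed[OF cpt] by (rule borel_closed)
    moreover have "- S \<in> sets borel" using S(1) finite_imp_closed borel_closed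
      by (metis borel_comp)
    ultimately have "\<Omega> \<inter> - S \<in> sets borel" by auto
    then show ?thesis using sets borelOn_sets_iff[OF cpt] by (auto simp: Diff_eq)
  qed
  have ae: "AE x in \<nu>. f x = (\<Sum>y\<in>S. f y * indicator {y} x)"
  proof (rule AE_I'[of "\<Omega> - S"])
    show "\<Omega> - S \<in> null_sets \<nu>" using diff null by auto
    show "{x \<in> space \<nu>. \<not> f x = (\<Sum>y\<in>S. f y * indicator {y} x)} \<subseteq> \<Omega> - S"
    proof
      fix x assume x: "x \<in> {x \<in> space \<nu>. \<not> f x = (\<Sum>y\<in>S. f y * indicator {y} x)}"
      show "x \<in> \<Omega> - S"
      proof (rule ccontr)
        assume "x \<notin> \<Omega> - S"
        then have "x \<in> S" using x sp by auto
        then have "(\<Sum>y\<in>S. f y * indicator {y} x) = f x"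
          using S(1) by (simp add: indicator_def of_bool_def if_distrib sum.delta' cong: if_cong)
        then show False using x by auto
      qed
    qed
  qed
  have "(\<integral>\<^sup>+x. f x \<partial>\<nu>) = (\<integral>\<^sup>+x. (\<Sum>y\<in>S. f y * indicator {y} x) \<partial>\<nu>)"
    by (rule nn_integral_cong_AE[OF ae])
  also have "\<dots> = (\<Sum>y\<in>S. (\<integral>\<^sup>+x. f y * indicator {y} x \<partial>\<nu>))"
    using S single by (intro nn_integral_sum) auto
  also have "\<dots> = (\<Sum>y\<in>S. f y * emeasure \<nu> {y})"
    using S single by (intro sum.cong refl nn_integral_cmult_indicator) auto
  finally show ?thesis .
qed

definition Dm :: "'a::metric_space set \<Rightarrow> 'a set \<Rightarrow> ('a \<Rightarrow> real) \<Rightarrow> 'a measure" where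
  "Dm \<Omega> S w = distr (point_measure S (\<lambda>y. ennreal (w y))) (borelOn \<Omega>) (\<lambda>y. y)"

context
  fixes \<Omega> :: "'a::metric_space set" and S :: "'a set" and w :: "'a \<Rightarrow> real"
  assumes cpt: "compact \<Omega>" and S: "finite S" "S \<subseteq> \<Omega>"
begin

lemma Dm_meas: "(\<lambda>y. y) \<in> measurable (point_measure S (\<lambda>y. ennreal (w y))) (borelOn \<Omega>)"
  using S by auto

lemma Dm_sets: "sets (Dm \<Omega> S w) = sets (borelOn \<Omega>)"
  unfolding Dm_def by simp

lemma Dm_space: "space (Dm \<Omega> S w) = \<Omega>"
  unfolding Dm_def by simp

lemma Dm_emeasure: "B \<in> sets (borelOn \<Omega>) \<Longrightarrow> emeasure (Dm \<Omega> S w) B = (\<Sum>y\<in>S \<inter> B. ennreal (w y))"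
  unfolding Dm_def using S
  by (subst emeasure_distr[OF Dm_meas]) (auto simp: space_point_measure emeasure_point_measure_finite Int_commute)

lemma Dm_nn: "(\<integral>\<^sup>+x. f x \<partial>Dm \<Omega> S w) = (\<Sum>y\<in>S. f y * ennreal (w y))"
proof -
  have e0: "emeasure (Dm \<Omega> S w) (\<Omega> - S) = 0"
  proof -
    have "\<Omega> - S \<in> sets (borelOn \<Omega>)"
    proof -
      have "\<Omega> \<in> sets borel" using compact_imp_closed[OF cpt] by (rule borel_closed)
      moreover have "- S \<in> sets borel" using S(1) finite_imp_closed borel_closed
        by (metis borel_comp)
      ultimately have "\<Omega> \<inter> - S \<in> sets borel" by auto
      then show ?thesis using borelOn_sets_iff[OF cpt] by (auto simp: Diff_eq)
    qed
    then show ?thesis by (simp add: Dm_emeasure)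
  qed
  have "(\<integral>\<^sup>+x. f x \<partial>Dm \<Omega> S w) = (\<Sum>y\<in>S. f y * emeasure (Dm \<Omega> S w) {y})"
    by (rule nn_fin[OF cpt Dm_sets S e0])
  also have "\<dots> = (\<Sum>y\<in>S. f y * ennreal (w y))"
  proof (intro sum.cong refl)
    fix y assume y: "y \<in> S"
    have "{y} \<in> sets (borelOn \<Omega>)" using y S borelOn_sets_iff[OF cpt] by auto
    moreover have "S \<inter> {y} = {y}" using y by auto
    ultimately show "f y * emeasure (Dm \<Omega> S w) {y} = f y * ennreal (w y)" by (simp add: Dm_emeasure)
  qed
  finally show ?thesis .
qed

lemma Dm_int:
  assumes w: "\<And>y. 0 \<le> w y" and f: "f \<in> borel_measurable (borelOn \<Omega>)"
  shows "(\<integral>x. f x \<partial>Dm \<Omega> S w) = (\<Sum>y\<in>S. w y * f y)"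
  unfolding Dm_def using S w
  by (subst integral_distr[OF Dm_meas f]) (simp add: lebesgue_integral_point_measure_finite)

lemma Dm_prob:
  assumes w: "\<And>y. 0 \<le> w y" and s: "(\<Sum>y\<in>S. w y) = 1"
  shows "prob_on \<Omega> (Dm \<Omega> S w)"
proof -
  have top: "\<Omega> \<in> sets (borelOn \<Omega>)" using sets.top[of "borelOn \<Omega>"] by simp
  have SO: "S \<inter> \<Omega> = S" using S by auto
  have "emeasure (Dm \<Omega> S w) (space (Dm \<Omega> S w)) = emeasure (Dm \<Omega> S w) \<Omega>"
    by (simp only: Dm_space)
  also have "\<dots> = (\<Sum>y\<in>S \<inter> \<Omega>. ennreal (w y))" by (rule Dm_emeasure[OF top])
  also have "\<dots> = (\<Sum>y\<in>S. ennreal (w y))" by (simp only: SO)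
  also have "\<dots> = ennreal (\<Sum>y\<in>S. w y)" by (rule sum_ennreal) (use w in auto)
  also have "\<dots> = 1" by (simp only: s ennreal_1)
  finally have "prob_space (Dm \<Omega> S w)" by (rule prob_spaceI)
  then show ?thesis unfolding prob_on_def using Dm_sets by blast
qed

end




lemma sp_mem: "space M = S \<times> T \<Longrightarrow> x \<in> space M \<Longrightarrow> fst x \<in> S \<and> snd x \<in> T"
  by (simp add: mem_Times_iff)

lemma prob_fin: "prob_space M \<Longrightarrow> finite_measure M"
  by (simp add: prob_space_def)

lemma couplings_prod:
  fixes \<Omega> :: "'a::metric_space set"
  assumes M: "prob_on \<Omega> M" and N: "prob_on \<Omega> N"
  shows "M \<Otimes>\<^sub>M N \<in> couplings \<Omega> M N"
proof -
  have pM: "prob_space M" and sM: "sets M = sets (borelOn \<Omega>)" using M unfolding prob_on_def by auto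
  have pN: "prob_space N" and sN: "sets N = sets (borelOn \<Omega>)" using N unfolding prob_on_def by auto
  have spM: "space M = \<Omega>" using sets_eq_imp_space_eq[OF sM] by simp
  have spN: "space N = \<Omega>" using sets_eq_imp_space_eq[OF sN] by simp
  have s: "sets (M \<Otimes>\<^sub>M N) = sets (borelOn \<Omega> \<Otimes>\<^sub>M borelOn \<Omega>)"
    using sM sN by (rule sets_pair_measure_cong)
  have d1: "distr (M \<Otimes>\<^sub>M N) (borelOn \<Omega>) fst = M"
  proof -
    have "distr (M \<Otimes>\<^sub>M N) (borelOn \<Omega>) fst = distr (M \<Otimes>\<^sub>M N) M fst"
      using sM by (intro distr_cong) auto
    also have "\<dots> = M" by (rule prob_space.distr_pair_fst[OF pN])
    finally show ?thesis .
  qed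
  have d2: "distr (M \<Otimes>\<^sub>M N) (borelOn \<Omega>) snd = N"
  proof (rule measure_eqI)
    show "sets (distr (M \<Otimes>\<^sub>M N) (borelOn \<Omega>) snd) = sets N" using sN by simp
    fix B assume B: "B \<in> sets (distr (M \<Otimes>\<^sub>M N) (borelOn \<Omega>) snd)"
    then have BN: "B \<in> sets N" using sN by simp
    have ms: "snd \<in> measurable (M \<Otimes>\<^sub>M N) (borelOn \<Omega>)"
      by (subst measurable_cong_sets[OF refl sN, symmetric]) (rule measurable_snd)
    have "snd -` B \<inter> space (M \<Otimes>\<^sub>M N) = space M \<times> B"
      using sets.sets_into_space[OF BN] by (auto simp: space_pair_measure)
    then have "emeasure (distr (M \<Otimes>\<^sub>M N) (borelOn \<Omega>) snd) B = emeasure (M \<Otimes>\<^sub>M N) (space M \<times> B)"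
      using B by (simp add: emeasure_distr[OF ms])
    also have "\<dots> = emeasure M (space M) * emeasure N B"
      using BN by (intro sigma_finite_measure.emeasure_pair_measure_Times) (auto simp: pN prob_space_imp_sigma_finite)
    also have "\<dots> = emeasure N B" using prob_space.emeasure_space_1[OF pM] by simp
    finally show "emeasure (distr (M \<Otimes>\<^sub>M N) (borelOn \<Omega>) snd) B = emeasure N B" .
  qed
  show ?thesis unfolding couplings_def using prob_space_pair[OF pM pN] s d1 d2 by auto
qed

lemma coupling_facts:
  fixes \<Omega> :: "'a::metric_space set"
  assumes cpt: "compact \<Omega>" and \<pi>: "\<pi> \<in> couplings \<Omega> M N"
  shows "prob_space \<pi>" "space \<pi> = \<Omega> \<times> \<Omega>"
    "fst \<in> measurable \<pi> (borelOn \<Omega>)" "snd \<in> measurable \<pi> (borelOn \<Omega>)"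
    "(\<lambda>p. dist (fst p) (snd p)) \<in> borel_measurable \<pi>"
    "integrable \<pi> (\<lambda>p. dist (fst p) (snd p))"
proof -
  have s: "sets \<pi> = sets (borelOn \<Omega> \<Otimes>\<^sub>M borelOn \<Omega>)" using \<pi> unfolding couplings_def by blast
  show p: "prob_space \<pi>" using \<pi> unfolding couplings_def by blast
  have "space \<pi> = space (borelOn \<Omega> \<Otimes>\<^sub>M borelOn \<Omega>)" by (rule sets_eq_imp_space_eq[OF s])
  also have "\<dots> = \<Omega> \<times> \<Omega>" by (simp only: space_pair_measure borelOn_space)
  finally show sp: "space \<pi> = \<Omega> \<times> \<Omega>" .
  show "fst \<in> measurable \<pi> (borelOn \<Omega>)"
    by (subst measurable_cong_sets[OF s refl]) (rule measurable_fst)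
  show "snd \<in> measurable \<pi> (borelOn \<Omega>)"
    by (subst measurable_cong_sets[OF s refl]) (rule measurable_snd)
  show m: "(\<lambda>p. dist (fst p) (snd p)) \<in> borel_measurable \<pi>"
    by (subst measurable_cong_sets[OF s refl]) (rule dist_meas[OF cpt])
  have bd: "bounded \<Omega>" by (rule compact_imp_bounded[OF cpt])
  show "integrable \<pi> (\<lambda>p. dist (fst p) (snd p))"
  proof (rule finite_measure.integrable_const_bound[where B="diameter \<Omega>"])
    show "finite_measure \<pi>" using p by (rule prob_fin)
    have "norm (dist (fst x) (snd x)) \<le> diameter \<Omega>" if "x \<in> space \<pi>" for x
    proof -
      have "fst x \<in> \<Omega>" "snd x \<in> \<Omega>" using sp_mem[OF sp that] by simp_all
      then have "dist (fst x) (snd x) \<le> diameter \<Omega>" by (rule diameter_bounded_bound[OF bd])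
      then show ?thesis by simp
    qed
    then show "AE x in \<pi>. norm (dist (fst x) (snd x)) \<le> diameter \<Omega>"
      by (rule AE_I2)
  qed (fact m)
qed

lemma W1_le:
  fixes \<Omega> :: "'a::metric_space set"
  assumes cpt: "compact \<Omega>" and \<pi>: "\<pi> \<in> couplings \<Omega> M N"
  shows "W1 \<Omega> M N \<le> (\<integral>p. dist (fst p) (snd p) \<partial>\<pi>)"
  unfolding W1_def
proof (rule cInf_lower)
  show "(\<integral>p. dist (fst p) (snd p) \<partial>\<pi>) \<in> (\<lambda>\<pi>. \<integral>p. dist (fst p) (snd p) \<partial>\<pi>) ` couplings \<Omega> M N"
    using \<pi> by auto
  show "bdd_below ((\<lambda>\<pi>. \<integral>p. dist (fst p) (snd p) \<partial>\<pi>) ` couplings \<Omega> M N)"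
    by (rule bdd_belowI[of _ 0]) (auto intro!: integral_nonneg_AE)
qed

lemma kant:
  fixes \<Omega> :: "'a::metric_space set"
  assumes cpt: "compact \<Omega>" and M: "prob_on \<Omega> M" and N: "prob_on \<Omega> N"
    and z: "L-lipschitz_on \<Omega> \<zeta>"
  shows "\<bar>(\<integral>x. \<zeta> x \<partial>M) - (\<integral>x. \<zeta> x \<partial>N)\<bar> \<le> L * W1 \<Omega> M N"
proof -
  have L0: "0 \<le> L" using z by (simp add: lipschitz_on_def)
  have zm: "\<zeta> \<in> borel_measurable (borelOn \<Omega>)"
    by (rule cont_meas[OF lipschitz_on_continuous_on[OF z]])
  have "bounded (\<zeta> ` \<Omega>)"
    using compact_continuous_image[OF lipschitz_on_continuous_on[OF z] cpt] by (rule compact_imp_bounded)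
  then obtain B where B: "\<And>x. x \<in> \<Omega> \<Longrightarrow> \<bar>\<zeta> x\<bar> \<le> B" unfolding bounded_iff by auto
  have key: "\<bar>(\<integral>x. \<zeta> x \<partial>M) - (\<integral>x. \<zeta> x \<partial>N)\<bar> \<le> L * (\<integral>p. dist (fst p) (snd p) \<partial>\<pi>)"
    if \<pi>: "\<pi> \<in> couplings \<Omega> M N" for \<pi>
  proof -
    note cf = coupling_facts[OF cpt \<pi>]
    have dM: "distr \<pi> (borelOn \<Omega>) fst = M" and dN: "distr \<pi> (borelOn \<Omega>) snd = N"
      using \<pi> unfolding couplings_def by auto
    have fin: "finite_measure \<pi>" using cf(1) by (simp add: prob_fin)
    have m1: "(\<lambda>p. \<zeta> (fst p)) \<in> borel_measurable \<pi>" by (rule measurable_compose[OF cf(3) zm])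
    have m2: "(\<lambda>p. \<zeta> (snd p)) \<in> borel_measurable \<pi>" by (rule measurable_compose[OF cf(4) zm])
    have i1: "integrable \<pi> (\<lambda>p. \<zeta> (fst p))"
    proof (rule finite_measure.integrable_const_bound[OF fin _ m1, where B=B])
      show "AE x in \<pi>. norm (\<zeta> (fst x)) \<le> B"
      proof (rule AE_I2)
        fix x assume "x \<in> space \<pi>"
        then have "fst x \<in> \<Omega>" using sp_mem[OF cf(2)] by blast
        then show "norm (\<zeta> (fst x)) \<le> B" using B by simp
      qed
    qed
    have i2: "integrable \<pi> (\<lambda>p. \<zeta> (snd p))"
    proof (rule finite_measure.integrable_const_bound[OF fin _ m2, where B=B])
      show "AE x in \<pi>. norm (\<zeta> (snd x)) \<le> B"
      proof (rule AE_I2)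
        fix x assume "x \<in> space \<pi>"
        then have "snd x \<in> \<Omega>" using sp_mem[OF cf(2)] by blast
        then show "norm (\<zeta> (snd x)) \<le> B" using B by simp
      qed
    qed
    have e1: "(\<integral>x. \<zeta> x \<partial>M) = (\<integral>p. \<zeta> (fst p) \<partial>\<pi>)"
      using integral_distr[OF cf(3) zm] dM by simp
    have e2: "(\<integral>x. \<zeta> x \<partial>N) = (\<integral>p. \<zeta> (snd p) \<partial>\<pi>)"
      using integral_distr[OF cf(4) zm] dN by simp
    have "(\<integral>x. \<zeta> x \<partial>M) - (\<integral>x. \<zeta> x \<partial>N) = (\<integral>p. \<zeta> (fst p) - \<zeta> (snd p) \<partial>\<pi>)"
      using e1 e2 i1 i2 by (simp add: integral_diff)
    also have "\<bar>\<dots>\<bar> \<le> (\<integral>p. norm (\<zeta> (fst p) - \<zeta> (snd p)) \<partial>\<pi>)"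
      using integral_norm_bound[of \<pi> "\<lambda>p. \<zeta> (fst p) - \<zeta> (snd p)"] by simp
    also have "\<dots> \<le> (\<integral>p. L * dist (fst p) (snd p) \<partial>\<pi>)"
    proof (rule integral_mono)
      show "integrable \<pi> (\<lambda>p. norm (\<zeta> (fst p) - \<zeta> (snd p)))"
        using Bochner_Integration.integrable_diff[OF i1 i2] by (rule integrable_norm)
      show "integrable \<pi> (\<lambda>p. L * dist (fst p) (snd p))"
        using cf(6) by (rule integrable_mult_right)
      fix p assume "p \<in> space \<pi>"
      then have "fst p \<in> \<Omega>" "snd p \<in> \<Omega>" using sp_mem[OF cf(2)] by simp_all
      then show "norm (\<zeta> (fst p) - \<zeta> (snd p)) \<le> L * dist (fst p) (snd p)"
        using lipschitz_onD[OF z] by (simp add: dist_real_def)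
    qed
    also have "\<dots> = L * (\<integral>p. dist (fst p) (snd p) \<partial>\<pi>)" by simp
    finally show ?thesis .
  qed
  have ne: "couplings \<Omega> M N \<noteq> {}" using couplings_prod[OF M N] by auto
  show ?thesis
  proof (cases "L = 0")
    case True
    then show ?thesis using key ne by fastforce
  next
    case False
    then have Lp: "0 < L" using L0 by simp
    have "\<bar>(\<integral>x. \<zeta> x \<partial>M) - (\<integral>x. \<zeta> x \<partial>N)\<bar> / L \<le> W1 \<Omega> M N"
      unfolding W1_def
    proof (rule cInf_greatest)
      show "(\<lambda>\<pi>. \<integral>p. dist (fst p) (snd p) \<partial>\<pi>) ` couplings \<Omega> M N \<noteq> {}" using ne by auto
      fix c assume "c \<in> (\<lambda>\<pi>. \<integral>p. dist (fst p) (snd p) \<partial>\<pi>) ` couplings \<Omega> M N"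
      then obtain \<pi> where "\<pi> \<in> couplings \<Omega> M N" "c = (\<integral>p. dist (fst p) (snd p) \<partial>\<pi>)" by auto
      then show "\<bar>(\<integral>x. \<zeta> x \<partial>M) - (\<integral>x. \<zeta> x \<partial>N)\<bar> / L \<le> c"
        using key Lp by (simp add: divide_le_eq mult.commute)
    qed
    then show ?thesis using Lp by (simp add: divide_le_eq mult.commute)
  qed
qed

lemma return_prob_on:
  "x \<in> \<Omega> \<Longrightarrow> prob_on \<Omega> (return (borelOn \<Omega>) x)"
  unfolding prob_on_def by (auto intro: prob_space_return)

lemma W1_dirac:
  fixes \<Omega> :: "'a::metric_space set"
  assumes cpt: "compact \<Omega>" and x: "x \<in> \<Omega>" and y: "y \<in> \<Omega>"
  shows "W1 \<Omega> (return (borelOn \<Omega>) x) (return (borelOn \<Omega>) y) \<le> dist x y"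
proof -
  let ?\<pi> = "return (borelOn \<Omega> \<Otimes>\<^sub>M borelOn \<Omega>) (x, y)"
  have sp: "(x, y) \<in> space (borelOn \<Omega> \<Otimes>\<^sub>M borelOn \<Omega>)" using x y by (simp add: space_pair_measure)
  have d1: "distr ?\<pi> (borelOn \<Omega>) fst = return (borelOn \<Omega>) x"
    using distr_return[OF measurable_fst sp] by simp
  have d2: "distr ?\<pi> (borelOn \<Omega>) snd = return (borelOn \<Omega>) y"
    using distr_return[OF measurable_snd sp] by simp
  have ps: "prob_space ?\<pi>" by (rule prob_space_return[OF sp])
  have "?\<pi> \<in> couplings \<Omega> (return (borelOn \<Omega>) x) (return (borelOn \<Omega>) y)"
    unfolding couplings_def using ps d1 d2 sets_return[of "borelOn \<Omega> \<Otimes>\<^sub>M borelOn \<Omega>" "(x,y)"] by blast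
  then have "W1 \<Omega> (return (borelOn \<Omega>) x) (return (borelOn \<Omega>) y) \<le> (\<integral>p. dist (fst p) (snd p) \<partial>?\<pi>)"
    by (rule W1_le[OF cpt])
  also have "\<dots> = dist x y" using integral_return[OF sp dist_meas[OF cpt]] by simp
  finally show ?thesis .
qed

lemma W1_diam:
  fixes \<Omega> :: "'a::metric_space set"
  assumes cpt: "compact \<Omega>" and x: "x \<in> \<Omega>" and \<mu>: "prob_on \<Omega> \<mu>"
  shows "W1 \<Omega> (return (borelOn \<Omega>) x) \<mu> \<le> diameter \<Omega>"
proof -
  let ?\<pi> = "return (borelOn \<Omega>) x \<Otimes>\<^sub>M \<mu>"
  have c: "?\<pi> \<in> couplings \<Omega> (return (borelOn \<Omega>) x) \<mu>"
    by (rule couplings_prod[OF return_prob_on[OF x] \<mu>])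
  note cf = coupling_facts[OF cpt c]
  have bd: "bounded \<Omega>" by (rule compact_imp_bounded[OF cpt])
  have "W1 \<Omega> (return (borelOn \<Omega>) x) \<mu> \<le> (\<integral>p. dist (fst p) (snd p) \<partial>?\<pi>)"
    by (rule W1_le[OF cpt c])
  also have "\<dots> \<le> (\<integral>p. diameter \<Omega> \<partial>?\<pi>)"
  proof (rule integral_mono[OF cf(6)])
    show "integrable ?\<pi> (\<lambda>p. diameter \<Omega>)"
      using prob_fin[OF cf(1)] by (rule finite_measure.integrable_const)
    fix p assume "p \<in> space ?\<pi>"
    then have "fst p \<in> \<Omega>" "snd p \<in> \<Omega>" using sp_mem[OF cf(2)] by simp_all
    then show "dist (fst p) (snd p) \<le> diameter \<Omega>" by (rule diameter_bounded_bound[OF bd])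
  qed
  also have "\<dots> = diameter \<Omega>"
    using prob_space.prob_space[OF cf(1)] by (simp add: prob_space.prob_space[OF cf(1)])
  finally show ?thesis .
qed




lemma msum:
  fixes g :: "'a \<Rightarrow> real"
  assumes "finite T" "set_mset M \<subseteq> T"
  shows "(\<Sum>z\<in>#M. g z) = (\<Sum>z\<in>T. real (count M z) * g z)"
  using assms(2)
proof (induction M)
  case empty
  then show ?case by simp
next
  case (add a M)
  then have aT: "a \<in> T" and MT: "set_mset M \<subseteq> T" by auto
  have "(\<Sum>z\<in>T. real (count (add_mset a M) z) * g z)
      = (\<Sum>z\<in>T. real (count M z) * g z + (if z = a then g z else 0))"
    by (rule sum.cong) (auto simp: algebra_simps)
  also have "\<dots> = (\<Sum>z\<in>T. real (count M z) * g z) + (\<Sum>z\<in>T. if z = a then g z else 0)"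
    by (rule sum.distrib)
  also have "(\<Sum>z\<in>T. if z = a then g z else 0) = g a" using aT assms(1) by (simp add: sum.delta')
  finally show ?case using add.IH[OF MT] by simp
qed

definition pw :: "('a \<Rightarrow> 'a multiset) \<Rightarrow> ('a \<Rightarrow> real) \<Rightarrow> real \<Rightarrow> ('a \<Rightarrow> real) \<Rightarrow> 'a \<Rightarrow> 'a \<Rightarrow> real" where
  "pw F A \<rho> h y z = real (count (F y) z) * exp (A z) * h z / (\<rho> * h y)"

lemma ind_sum:
  "finite S' \<Longrightarrow> (\<Sum>z\<in>S'. (g::'a\<Rightarrow>real) z * indicator B z) = (\<Sum>z\<in>S'\<inter>B. g z)"
  by (simp add: indicator_def of_bool_def if_distrib Int_def sum.inter_filter cong: if_cong)

context
  fixes \<Omega> :: "'a::metric_space set" and F :: "'a \<Rightarrow> 'a multiset" and A h :: "'a \<Rightarrow> real" and \<rho> :: real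
  assumes cpt: "compact \<Omega>" and Fsub: "\<And>x. x \<in> \<Omega> \<Longrightarrow> set_mset (F x) \<subseteq> \<Omega>"
    and hpos: "\<And>x. x \<in> \<Omega> \<Longrightarrow> 0 < h x" and rpos: "0 < \<rho>"
    and heig: "\<And>x. x \<in> \<Omega> \<Longrightarrow> transfer F A h x = \<rho> * h x"
begin

lemma Pform:
  assumes y: "y \<in> \<Omega>" and T: "finite T" "set_mset (F y) \<subseteq> T"
  shows "Pnorm F A \<rho> h \<phi> y = (\<Sum>z\<in>T. pw F A \<rho> h y z * \<phi> z)"
proof -
  have "Pnorm F A \<rho> h \<phi> y = (\<Sum>z\<in>#F y. exp (A z) * (h z * \<phi> z)) / (\<rho> * h y)"
    by (simp add: Pnorm_def transfer_def)
  also have "\<dots> = (\<Sum>z\<in>T. real (count (F y) z) * (exp (A z) * (h z * \<phi> z))) / (\<rho> * h y)"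
    by (simp add: msum[OF T])
  also have "\<dots> = (\<Sum>z\<in>T. pw F A \<rho> h y z * \<phi> z)"
    by (simp add: sum_divide_distrib pw_def mult.assoc)
  finally show ?thesis .
qed

lemma pw_nonneg: "y \<in> \<Omega> \<Longrightarrow> 0 \<le> pw F A \<rho> h y z"
proof -
  assume y: "y \<in> \<Omega>"
  show ?thesis
  proof (cases "count (F y) z = 0")
    case True then show ?thesis by (simp add: pw_def)
  next
    case False
    then have "z \<in> \<Omega>" using Fsub[OF y] by (auto simp: count_eq_zero_iff)
    then have hz: "0 \<le> h z" using hpos less_imp_le by blast
    have "0 < \<rho> * h y" using hpos[OF y] rpos by simp
    then show ?thesis using hz unfolding pw_def
      by (intro divide_nonneg_pos mult_nonneg_nonneg) auto
  qed
qed

lemma Pcong: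
  assumes y: "y \<in> \<Omega>" and fg: "\<And>z. z \<in> \<Omega> \<Longrightarrow> f z = g z"
  shows "Pnorm F A \<rho> h f y = Pnorm F A \<rho> h g y"
proof -
  have T: "finite (set_mset (F y))" "set_mset (F y) \<subseteq> set_mset (F y)" by auto
  have "(\<Sum>z\<in>set_mset (F y). pw F A \<rho> h y z * f z) = (\<Sum>z\<in>set_mset (F y). pw F A \<rho> h y z * g z)"
    using Fsub[OF y] fg by (intro sum.cong refl) auto
  then show ?thesis by (simp only: Pform[OF y T])
qed

lemma Pconst: "y \<in> \<Omega> \<Longrightarrow> Pnorm F A \<rho> h (\<lambda>_. c) y = c"
proof -
  assume y: "y \<in> \<Omega>"
  have "transfer F A (\<lambda>z. h z * c) y = (\<Sum>z\<in>#F y. c * (exp (A z) * h z))"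
    by (simp add: transfer_def mult_ac)
  also have "\<dots> = c * transfer F A h y" by (simp add: transfer_def sum_mset_distrib_left)
  finally show ?thesis using heig[OF y] hpos[OF y] rpos by (simp add: Pnorm_def)
qed

lemma Pn_cong: "y \<in> \<Omega> \<Longrightarrow> (\<And>z. z \<in> \<Omega> \<Longrightarrow> f z = g z) \<Longrightarrow> (Pnorm F A \<rho> h ^^ n) f y = (Pnorm F A \<rho> h ^^ n) g y"
proof (induction n arbitrary: y)
  case 0 then show ?case by simp
next
  case (Suc n)
  have "(Pnorm F A \<rho> h ^^ n) f z = (Pnorm F A \<rho> h ^^ n) g z" if "z \<in> \<Omega>" for z
    using Suc.IH[OF that Suc.prems(2)] .
  then have "Pnorm F A \<rho> h ((Pnorm F A \<rho> h ^^ n) f) y = Pnorm F A \<rho> h ((Pnorm F A \<rho> h ^^ n) g) y"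
    by (rule Pcong[OF Suc.prems(1)])
  then show ?case by simp
qed

lemma Pn_const: "y \<in> \<Omega> \<Longrightarrow> (Pnorm F A \<rho> h ^^ n) (\<lambda>_. c) y = c"
proof (induction n arbitrary: y)
  case 0 then show ?case by simp
next
  case (Suc n)
  have "(Pnorm F A \<rho> h ^^ n) (\<lambda>_. c) z = c" if "z \<in> \<Omega>" for z
    using Suc.IH[OF that] .
  then have "Pnorm F A \<rho> h ((Pnorm F A \<rho> h ^^ n) (\<lambda>_. c)) y = Pnorm F A \<rho> h (\<lambda>_. c) y"
    by (rule Pcong[OF Suc.prems(1)])
  then show ?case using Pconst[OF Suc.prems(1)] by simp
qed

lemma Pminus: "y \<in> \<Omega> \<Longrightarrow> Pnorm F A \<rho> h (\<lambda>x. f x - c) y = Pnorm F A \<rho> h f y - c"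
proof -
  assume y: "y \<in> \<Omega>"
  have fin: "finite (set_mset (F y))" by simp
  have "Pnorm F A \<rho> h (\<lambda>x. f x - c) y = Pnorm F A \<rho> h f y - c * Pnorm F A \<rho> h (\<lambda>_. 1) y"
    by (simp add: Pform[OF y fin] algebra_simps sum_subtractf sum_distrib_left)
  then show ?thesis using Pconst[OF y] by simp
qed

lemma Pn_minus: "y \<in> \<Omega> \<Longrightarrow> (Pnorm F A \<rho> h ^^ n) (\<lambda>x. f x - c) y = (Pnorm F A \<rho> h ^^ n) f y - c"
proof (induction n arbitrary: y)
  case 0 then show ?case by simp
next
  case (Suc n)
  have "(Pnorm F A \<rho> h ^^ n) (\<lambda>x. f x - c) z = (Pnorm F A \<rho> h ^^ n) f z - c" if "z \<in> \<Omega>" for z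
    using Suc.IH[OF that] .
  then have "Pnorm F A \<rho> h ((Pnorm F A \<rho> h ^^ n) (\<lambda>x. f x - c)) y
      = Pnorm F A \<rho> h (\<lambda>x. (Pnorm F A \<rho> h ^^ n) f x - c) y"
    by (rule Pcong[OF Suc.prems(1)])
  then show ?case using Pminus[OF Suc.prems(1)] by simp
qed

lemma Pdual_step:
  assumes S: "finite S" "S \<subseteq> \<Omega>" and w: "\<And>y. 0 \<le> w y"
  defines "S' \<equiv> (\<Union>y\<in>S. set_mset (F y))"
  defines "w' \<equiv> (\<lambda>z. \<Sum>y\<in>S. w y * pw F A \<rho> h y z)"
  shows "Pdual \<Omega> (Pnorm F A \<rho> h) (Dm \<Omega> S w) = Dm \<Omega> S' w'"
proof -
  have S': "finite S'" "S' \<subseteq> \<Omega>" using S Fsub unfolding S'_def by auto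
  have w': "0 \<le> w' z" for z unfolding w'_def using S w pw_nonneg by (intro sum_nonneg mult_nonneg_nonneg) auto
  have FS': "y \<in> S \<Longrightarrow> set_mset (F y) \<subseteq> S'" for y unfolding S'_def by auto
  have "Dm \<Omega> S' w' = measure_of \<Omega> (sets (borelOn \<Omega>)) (emeasure (Dm \<Omega> S' w'))"
    using measure_of_of_measure[of "Dm \<Omega> S' w'"] Dm_space[OF cpt S'] Dm_sets[OF cpt S'] by simp
  also have "\<dots> = measure_of \<Omega> (sets (borelOn \<Omega>))
      (\<lambda>B. \<integral>\<^sup>+ x. ennreal (Pnorm F A \<rho> h (indicator B) x) \<partial>Dm \<Omega> S w)"
  proof (rule measure_of_eq)
    show "sets (borelOn \<Omega>) \<subseteq> Pow \<Omega>" using sets.space_closed[of "borelOn \<Omega>"] by simp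
    fix B assume "B \<in> sigma_sets \<Omega> (sets (borelOn \<Omega>))"
    then have B: "B \<in> sets (borelOn \<Omega>)" using sets.sigma_sets_eq[of "borelOn \<Omega>"] by simp
    have Pind: "Pnorm F A \<rho> h (indicator B) y = (\<Sum>z\<in>S'. pw F A \<rho> h y z * indicator B z)" if "y \<in> S" for y
      using that S by (intro Pform S'(1) FS') auto
    have Pnn: "0 \<le> Pnorm F A \<rho> h (indicator B) y" if "y \<in> S" for y
      using that S pw_nonneg by (auto simp: Pind intro!: sum_nonneg)
    have real_eq: "(\<Sum>y\<in>S. Pnorm F A \<rho> h (indicator B) y * w y) = (\<Sum>z\<in>S' \<inter> B. w' z)"
    proof -
      have "(\<Sum>y\<in>S. Pnorm F A \<rho> h (indicator B) y * w y)
          = (\<Sum>y\<in>S. \<Sum>z\<in>S'. (w y * pw F A \<rho> h y z) * indicator B z)"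
        by (simp add: Pind sum_distrib_right sum_distrib_left mult_ac)
      also have "\<dots> = (\<Sum>z\<in>S'. \<Sum>y\<in>S. (w y * pw F A \<rho> h y z) * indicator B z)"
        by (rule sum.swap)
      also have "\<dots> = (\<Sum>z\<in>S'. w' z * indicator B z)"
        by (simp add: w'_def sum_distrib_right)
      also have "\<dots> = (\<Sum>z\<in>S' \<inter> B. w' z)" by (rule ind_sum[OF S'(1)])
      finally show ?thesis .
    qed
    have "emeasure (Dm \<Omega> S' w') B = (\<Sum>z\<in>S' \<inter> B. ennreal (w' z))"
      by (rule Dm_emeasure[OF cpt S' B])
    also have "\<dots> = ennreal (\<Sum>z\<in>S' \<inter> B. w' z)" using w' by (simp add: sum_ennreal)
    also have "\<dots> = ennreal (\<Sum>y\<in>S. Pnorm F A \<rho> h (indicator B) y * w y)" by (simp add: real_eq)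
    also have "\<dots> = (\<Sum>y\<in>S. ennreal (Pnorm F A \<rho> h (indicator B) y) * ennreal (w y))"
      using Pnn w by (simp add: sum_ennreal[symmetric] ennreal_mult)
    also have "\<dots> = (\<integral>\<^sup>+ x. ennreal (Pnorm F A \<rho> h (indicator B) x) \<partial>Dm \<Omega> S w)"
      by (simp add: Dm_nn[OF cpt S])
    finally show "emeasure (Dm \<Omega> S' w') B = (\<integral>\<^sup>+ x. ennreal (Pnorm F A \<rho> h (indicator B) x) \<partial>Dm \<Omega> S w)" .
  qed
  finally show ?thesis unfolding Pdual_def by simp
qed

lemma iter:
  assumes x: "x \<in> \<Omega>"
  shows "\<exists>S w. finite S \<and> S \<subseteq> \<Omega> \<and> (\<forall>y. 0 \<le> w y) \<and>
    (Pdual \<Omega> (Pnorm F A \<rho> h) ^^ n) (return (borelOn \<Omega>) x) = Dm \<Omega> S w \<and>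
    (\<forall>\<phi>. (\<Sum>y\<in>S. w y * \<phi> y) = (Pnorm F A \<rho> h ^^ n) \<phi> x)"
proof (induction n)
  case 0
  have S: "finite {x}" "{x} \<subseteq> \<Omega>" using x by auto
  have "return (borelOn \<Omega>) x = Dm \<Omega> {x} (\<lambda>_. 1)"
  proof (rule measure_eqI)
    show "sets (return (borelOn \<Omega>) x) = sets (Dm \<Omega> {x} (\<lambda>_. 1))" by (simp add: Dm_sets[OF cpt S])
    fix B assume "B \<in> sets (return (borelOn \<Omega>) x)"
    then have B: "B \<in> sets (borelOn \<Omega>)" by simp
    show "emeasure (return (borelOn \<Omega>) x) B = emeasure (Dm \<Omega> {x} (\<lambda>_. 1)) B"
      using B by (simp add: Dm_emeasure[OF cpt S B] indicator_def)
  qed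
  then show ?case using S by (intro exI[of _ "{x}"] exI[of _ "\<lambda>_. 1"]) auto
next
  case (Suc n)
  then obtain S w where S: "finite S" "S \<subseteq> \<Omega>" and w: "\<forall>y. 0 \<le> w y"
    and eq: "(Pdual \<Omega> (Pnorm F A \<rho> h) ^^ n) (return (borelOn \<Omega>) x) = Dm \<Omega> S w"
    and sm: "\<forall>\<phi>. (\<Sum>y\<in>S. w y * \<phi> y) = (Pnorm F A \<rho> h ^^ n) \<phi> x" by blast
  define S' where "S' = (\<Union>y\<in>S. set_mset (F y))"
  define w' where "w' = (\<lambda>z. \<Sum>y\<in>S. w y * pw F A \<rho> h y z)"
  have S': "finite S'" "S' \<subseteq> \<Omega>" using S Fsub unfolding S'_def by auto
  have w': "0 \<le> w' z" for z unfolding w'_def using S w pw_nonneg by (intro sum_nonneg mult_nonneg_nonneg) auto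
  have st: "Pdual \<Omega> (Pnorm F A \<rho> h) (Dm \<Omega> S w) = Dm \<Omega> S' w'"
    unfolding S'_def w'_def using S w by (intro Pdual_step) auto
  have "(\<Sum>z\<in>S'. w' z * \<phi> z) = (Pnorm F A \<rho> h ^^ Suc n) \<phi> x" for \<phi>
  proof -
    have "(\<Sum>z\<in>S'. w' z * \<phi> z) = (\<Sum>y\<in>S. w y * (\<Sum>z\<in>S'. pw F A \<rho> h y z * \<phi> z))"
      unfolding w'_def by (simp add: sum_distrib_right sum_distrib_left mult_ac sum.swap[of _ S'])
    also have "\<dots> = (\<Sum>y\<in>S. w y * Pnorm F A \<rho> h \<phi> y)"
      using S S' by (intro sum.cong refl arg_cong2[where f="(*)"] Pform[symmetric]) (auto simp: S'_def)
    also have "\<dots> = (Pnorm F A \<rho> h ^^ n) (Pnorm F A \<rho> h \<phi>) x" using sm by simp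
    also have "\<dots> = (Pnorm F A \<rho> h ^^ Suc n) \<phi> x" by (simp only: funpow_Suc_right comp_def)
    finally show ?thesis .
  qed
  then show ?case using S' w' st eq by (intro exI[of _ S'] exI[of _ w']) auto
qed

end




lemma Lip_is:
  assumes "\<exists>L. L-lipschitz_on \<Omega> f"
  shows "(Lip \<Omega> f)-lipschitz_on \<Omega> f"
proof -
  have ne: "{L. L-lipschitz_on \<Omega> f} \<noteq> {}" using assms by auto
  have nn: "0 \<le> Lip \<Omega> f" unfolding Lip_def using ne
    by (intro cInf_greatest) (auto simp: lipschitz_on_def)
  have "dist (f x) (f y) \<le> Lip \<Omega> f * dist x y" if x: "x \<in> \<Omega>" and y: "y \<in> \<Omega>" for x y
  proof (cases "x = y")
    case True then show ?thesis by simp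
  next
    case False
    then have d: "0 < dist x y" by simp
    have "dist (f x) (f y) / dist x y \<le> Lip \<Omega> f" unfolding Lip_def
    proof (rule cInf_greatest[OF ne])
      fix L assume "L \<in> {L. L-lipschitz_on \<Omega> f}"
      then have "dist (f x) (f y) \<le> L * dist x y" using x y by (auto simp: lipschitz_on_def)
      then show "dist (f x) (f y) / dist x y \<le> L" using d by (simp add: divide_le_eq)
    qed
    then show ?thesis using d by (simp add: divide_le_eq)
  qed
  then show ?thesis using nn by (auto simp: lipschitz_on_def)
qed

lemma Lip_le: "K-lipschitz_on \<Omega> f \<Longrightarrow> Lip \<Omega> f \<le> K"
  unfolding Lip_def by (rule cInf_lower) (auto intro!: bdd_belowI[of _ 0] simp: lipschitz_on_def)

lemma int_cont:
  fixes \<Omega> :: "'a::metric_space set"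
  assumes cpt: "compact \<Omega>" and \<mu>: "prob_on \<Omega> \<mu>" and f: "continuous_on \<Omega> f"
  shows "integrable \<mu> (f :: 'a \<Rightarrow> real)"
proof -
  have s: "sets \<mu> = sets (borelOn \<Omega>)" and p: "prob_space \<mu>" using \<mu> unfolding prob_on_def by auto
  have sp: "space \<mu> = \<Omega>" using sets_eq_imp_space_eq[OF s] by simp
  have m: "f \<in> borel_measurable \<mu>" using cont_meas[OF f] measurable_cong_sets[OF s refl] by blast
  have "bounded (f ` \<Omega>)" using compact_continuous_image[OF f cpt] by (rule compact_imp_bounded)
  then obtain B where B: "\<And>x. x \<in> \<Omega> \<Longrightarrow> norm (f x) \<le> B" unfolding bounded_iff by auto
  show ?thesis
    by (rule finite_measure.integrable_const_bound[OF prob_fin[OF p] _ m, where B=B])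
       (rule AE_I2, use sp B in simp)
qed

context
  fixes \<Omega> :: "'a::metric_space set" and F :: "'a \<Rightarrow> 'a multiset" and A h :: "'a \<Rightarrow> real" and \<rho> :: real
    and C lam :: real and \<mu> :: "'a measure"
  assumes cpt: "compact \<Omega>" and Fsub: "\<And>x. x \<in> \<Omega> \<Longrightarrow> set_mset (F x) \<subseteq> \<Omega>"
    and hpos: "\<And>x. x \<in> \<Omega> \<Longrightarrow> 0 < h x" and rpos: "0 < \<rho>"
    and heig: "\<And>x. x \<in> \<Omega> \<Longrightarrow> transfer F A h x = \<rho> * h x"
    and C: "0 < C" and lam: "0 < lam"
    and contr: "\<forall>M N n. prob_on \<Omega> M \<and> prob_on \<Omega> N \<longrightarrow>
        W1 \<Omega> ((Pdual \<Omega> (Pnorm F A \<rho> h) ^^ n) M) ((Pdual \<Omega> (Pnorm F A \<rho> h) ^^ n) N)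
          \<le> C * lam ^ n * W1 \<Omega> M N"
    and mu: "prob_on \<Omega> \<mu>" and mu_inv: "Pdual \<Omega> (Pnorm F A \<rho> h) \<mu> = \<mu>"
begin

lemma meas_of:
  assumes x: "x \<in> \<Omega>"
  shows "\<exists>M. prob_on \<Omega> M \<and> (Pdual \<Omega> (Pnorm F A \<rho> h) ^^ n) (return (borelOn \<Omega>) x) = M \<and>
     (\<forall>\<zeta>. continuous_on \<Omega> \<zeta> \<longrightarrow> (\<integral>y. \<zeta> y \<partial>M) = (Pnorm F A \<rho> h ^^ n) \<zeta> x)"
proof -
  obtain S w where S: "finite S" "S \<subseteq> \<Omega>" and w: "\<forall>y. 0 \<le> w y"
    and eq: "(Pdual \<Omega> (Pnorm F A \<rho> h) ^^ n) (return (borelOn \<Omega>) x) = Dm \<Omega> S w"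
    and sm: "\<forall>\<phi>. (\<Sum>y\<in>S. w y * \<phi> y) = (Pnorm F A \<rho> h ^^ n) \<phi> x"
    using iter[OF cpt Fsub hpos rpos heig x, of n] by blast
  have "(\<Sum>y\<in>S. w y) = 1" using sm[rule_format, of "\<lambda>_. 1"] Pn_const[OF cpt Fsub hpos rpos heig x] by simp
  then have p: "prob_on \<Omega> (Dm \<Omega> S w)" using Dm_prob[OF cpt S] w by auto
  have "(\<integral>y. \<zeta> y \<partial>Dm \<Omega> S w) = (Pnorm F A \<rho> h ^^ n) \<zeta> x" if "continuous_on \<Omega> \<zeta>" for \<zeta>
    using Dm_int[OF cpt S, of w \<zeta>] w cont_meas[OF that] sm by simp
  then show ?thesis using p eq by auto
qed

lemma mu_fix: "(Pdual \<Omega> (Pnorm F A \<rho> h) ^^ n) \<mu> = \<mu>"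
  by (induction n) (simp_all add: mu_inv)

lemma core:
  assumes z: "L-lipschitz_on \<Omega> \<zeta>" and z0: "(\<integral>x. \<zeta> x \<partial>\<mu>) = 0" and x: "x \<in> \<Omega>"
  shows "\<And>y. y \<in> \<Omega> \<Longrightarrow> \<bar>(Pnorm F A \<rho> h ^^ n) \<zeta> x - (Pnorm F A \<rho> h ^^ n) \<zeta> y\<bar> \<le> C * lam ^ n * L * dist x y"
    and "\<bar>(Pnorm F A \<rho> h ^^ n) \<zeta> x\<bar> \<le> C * lam ^ n * L * diameter \<Omega>"
proof -
  have L0: "0 \<le> L" using z by (simp add: lipschitz_on_def)
  have zc: "continuous_on \<Omega> \<zeta>" by (rule lipschitz_on_continuous_on[OF z])
  obtain Mx where Mx: "prob_on \<Omega> Mx" "(Pdual \<Omega> (Pnorm F A \<rho> h) ^^ n) (return (borelOn \<Omega>) x) = Mx"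
    "(\<integral>y. \<zeta> y \<partial>Mx) = (Pnorm F A \<rho> h ^^ n) \<zeta> x"
    using meas_of[OF x, of n] zc by blast
  {
    fix y assume y: "y \<in> \<Omega>"
    obtain My where My: "prob_on \<Omega> My" "(Pdual \<Omega> (Pnorm F A \<rho> h) ^^ n) (return (borelOn \<Omega>) y) = My"
      "(\<integral>y. \<zeta> y \<partial>My) = (Pnorm F A \<rho> h ^^ n) \<zeta> y"
      using meas_of[OF y, of n] zc by blast
    have "\<bar>(Pnorm F A \<rho> h ^^ n) \<zeta> x - (Pnorm F A \<rho> h ^^ n) \<zeta> y\<bar> \<le> L * W1 \<Omega> Mx My"
      using kant[OF cpt Mx(1) My(1) z] Mx(3) My(3) by simp
    also have "\<dots> \<le> L * (C * lam ^ n * W1 \<Omega> (return (borelOn \<Omega>) x) (return (borelOn \<Omega>) y))"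
      using contr return_prob_on[OF x] return_prob_on[OF y] Mx(2) My(2) L0
      by (intro mult_left_mono) auto
    also have "\<dots> \<le> L * (C * lam ^ n * dist x y)"
      using W1_dirac[OF cpt x y] L0 C lam by (intro mult_left_mono) auto
    finally show "\<bar>(Pnorm F A \<rho> h ^^ n) \<zeta> x - (Pnorm F A \<rho> h ^^ n) \<zeta> y\<bar> \<le> C * lam ^ n * L * dist x y"
      by (simp add: mult_ac)
  }
  have "\<bar>(Pnorm F A \<rho> h ^^ n) \<zeta> x\<bar> = \<bar>(\<integral>y. \<zeta> y \<partial>Mx) - (\<integral>y. \<zeta> y \<partial>\<mu>)\<bar>" using Mx(3) z0 by simp
  also have "\<dots> \<le> L * W1 \<Omega> Mx \<mu>" by (rule kant[OF cpt Mx(1) mu z])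
  also have "\<dots> \<le> L * (C * lam ^ n * W1 \<Omega> (return (borelOn \<Omega>) x) \<mu>)"
    using contr return_prob_on[OF x] mu Mx(2) mu_fix[of n] L0
    by (intro mult_left_mono) (metis)
  also have "\<dots> \<le> L * (C * lam ^ n * diameter \<Omega>)"
    using W1_diam[OF cpt x mu] L0 C lam by (intro mult_left_mono) auto
  finally show "\<bar>(Pnorm F A \<rho> h ^^ n) \<zeta> x\<bar> \<le> C * lam ^ n * L * diameter \<Omega>"
    by (simp add: mult_ac)
qed

end




lemma lim_zero:
  fixes a K lam :: real
  assumes "\<And>n. a \<le> K * lam ^ n" "0 < lam" "lam < 1"
  shows "a \<le> 0"
proof -
  have "(\<lambda>n. K * lam ^ n) \<longlonglongrightarrow> K * 0"
    using assms(2,3) by (intro tendsto_mult tendsto_const LIMSEQ_power_zero) auto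
  then show ?thesis using assms(1) by (intro LIMSEQ_le_const[of "\<lambda>n. K * lam ^ n"]) auto
qed

theorem mainTheorem3:
  fixes \<Omega> :: "'a::metric_space set"
    and F :: "'a \<Rightarrow> 'a multiset" and k :: nat and \<theta> :: real
    and A h :: "'a \<Rightarrow> real" and \<rho> C lam :: real and \<mu> :: "'a measure"
  assumes compact: "compact \<Omega>"
    and ics: "ICS \<Omega> k \<theta> F" and theta: "0 < \<theta>" "\<theta> < 1"
    and attr: "has_attractor \<Omega> F"
    and A_lip: "\<exists>L. L-lipschitz_on \<Omega> A"
    and rho: "\<rho> = spectral_radiusC \<Omega> (transfer F A)"
    and h_pos: "\<forall>x\<in>\<Omega>. 0 < h x"
    and h_lip: "\<exists>L. L-lipschitz_on \<Omega> h"
    and h_eig: "\<forall>x\<in>\<Omega>. transfer F A h x = \<rho> * h x"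
    and C: "0 < C" and lam: "0 < lam" "lam < 1"
    and contr: "\<forall>M N n. prob_on \<Omega> M \<and> prob_on \<Omega> N \<longrightarrow>
        W1 \<Omega> ((Pdual \<Omega> (Pnorm F A \<rho> h) ^^ n) M) ((Pdual \<Omega> (Pnorm F A \<rho> h) ^^ n) N)
          \<le> C * lam ^ n * W1 \<Omega> M N"
    and mu: "prob_on \<Omega> \<mu>" and mu_inv: "Pdual \<Omega> (Pnorm F A \<rho> h) \<mu> = \<mu>"
  shows "(\<forall>\<zeta> n. (\<exists>L. L-lipschitz_on \<Omega> \<zeta>) \<and> (\<integral>x. \<zeta> x \<partial>\<mu>) = 0 \<longrightarrow>
            supnorm \<Omega> ((Pnorm F A \<rho> h ^^ n) \<zeta>) + Lip \<Omega> ((Pnorm F A \<rho> h ^^ n) \<zeta>)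
              \<le> (1 + diameter \<Omega>) * C * Lip \<Omega> \<zeta> * lam ^ n)
       \<and> (\<forall>g. (\<forall>x\<in>\<Omega>. 0 < g x) \<and> (\<exists>L. L-lipschitz_on \<Omega> g) \<and>
              (\<forall>x\<in>\<Omega>. transfer F A g x = \<rho> * g x)
            \<longrightarrow> (\<exists>c. \<forall>x\<in>\<Omega>. g x = c * h x))"
proof -
  have Fsub: "\<And>x. x \<in> \<Omega> \<Longrightarrow> set_mset (F x) \<subseteq> \<Omega>" using ics unfolding ICS_def by auto
  have hpos: "\<And>x. x \<in> \<Omega> \<Longrightarrow> 0 < h x" using h_pos by auto
  have heig: "\<And>x. x \<in> \<Omega> \<Longrightarrow> transfer F A h x = \<rho> * h x" using h_eig by auto
  have ne: "\<Omega> \<noteq> {}"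
  proof -
    have s: "sets \<mu> = sets (borelOn \<Omega>)" and p: "prob_space \<mu>" using mu unfolding prob_on_def by auto
    show ?thesis using sets_eq_imp_space_eq[OF s] prob_space.not_empty[OF p] by simp
  qed
  then obtain x0 where x0: "x0 \<in> \<Omega>" by auto
  then obtain x1 where x1: "x1 \<in> \<Omega>" "x0 \<in># F x1" using attr unfolding has_attractor_def by auto
  obtain M' where M': "F x1 = add_mset x0 M'" using multi_member_split[OF x1(2)] by auto
  have "0 \<le> (\<Sum>z\<in>#M'. exp (A z) * h z)"
  proof -
    have "(\<Sum>z\<in>#M'. exp (A z) * h z) = (\<Sum>z\<in>set_mset M'. real (count M' z) * (exp (A z) * h z))"
      by (rule msum) auto
    also have "0 \<le> \<dots>"
    proof (rule sum_nonneg)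
      fix z assume z: "z \<in> set_mset M'"
      then have "z \<in> \<Omega>" using Fsub[OF x1(1)] M' by auto
      then have "0 < h z" by (rule hpos)
      then show "0 \<le> real (count M' z) * (exp (A z) * h z)" by simp
    qed
    finally show ?thesis .
  qed
  moreover have "0 < exp (A x0) * h x0" using hpos[OF x0] by simp
  ultimately have "0 < transfer F A h x1" using M' by (simp add: transfer_def)
  then have "0 < \<rho> * h x1" using heig[OF x1(1)] by simp
  then have rpos: "0 < \<rho>" using hpos[OF x1(1)] by (simp add: zero_less_mult_iff)
  have cr1: "\<And>L \<zeta> x y n. L-lipschitz_on \<Omega> \<zeta> \<Longrightarrow> (\<integral>x. \<zeta> x \<partial>\<mu>) = 0 \<Longrightarrow> x \<in> \<Omega> \<Longrightarrow> y \<in> \<Omega> \<Longrightarrow>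
     \<bar>(Pnorm F A \<rho> h ^^ n) \<zeta> x - (Pnorm F A \<rho> h ^^ n) \<zeta> y\<bar> \<le> C * lam ^ n * L * dist x y"
    apply (rule core(1)[OF compact Fsub hpos rpos heig C lam(1) contr mu mu_inv])
    by simp_all
  have cr2: "\<And>L \<zeta> x n. L-lipschitz_on \<Omega> \<zeta> \<Longrightarrow> (\<integral>x. \<zeta> x \<partial>\<mu>) = 0 \<Longrightarrow> x \<in> \<Omega> \<Longrightarrow>
     \<bar>(Pnorm F A \<rho> h ^^ n) \<zeta> x\<bar> \<le> C * lam ^ n * L * diameter \<Omega>"
    apply (rule core(2)[OF compact Fsub hpos rpos heig C lam(1) contr mu mu_inv])
    by simp_all
  have PcongE: "\<And>f g y. y \<in> \<Omega> \<Longrightarrow> (\<And>z. z \<in> \<Omega> \<Longrightarrow> f z = g z) \<Longrightarrow> Pnorm F A \<rho> h f y = Pnorm F A \<rho> h g y"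
    apply (rule Pcong[OF compact Fsub hpos rpos heig])
    by simp_all
  have Pn_minusE: "\<And>y n f c. y \<in> \<Omega> \<Longrightarrow> (Pnorm F A \<rho> h ^^ n) (\<lambda>x. f x - c) y = (Pnorm F A \<rho> h ^^ n) f y - c"
    apply (rule Pn_minus[OF compact Fsub hpos rpos heig])
    by simp_all
  have part1: "supnorm \<Omega> ((Pnorm F A \<rho> h ^^ n) \<zeta>) + Lip \<Omega> ((Pnorm F A \<rho> h ^^ n) \<zeta>)
              \<le> (1 + diameter \<Omega>) * C * Lip \<Omega> \<zeta> * lam ^ n"
    if zl: "\<exists>L. L-lipschitz_on \<Omega> \<zeta>" and z0: "(\<integral>x. \<zeta> x \<partial>\<mu>) = 0" for \<zeta> n
  proof -
    let ?L = "Lip \<Omega> \<zeta>"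
    have z: "?L-lipschitz_on \<Omega> \<zeta>" by (rule Lip_is[OF zl])
    have L0: "0 \<le> ?L" using z by (simp add: lipschitz_on_def)
    let ?f = "(Pnorm F A \<rho> h ^^ n) \<zeta>"
    have K0: "0 \<le> C * lam ^ n * ?L" using C lam L0 by simp
    have "(C * lam ^ n * ?L)-lipschitz_on \<Omega> ?f"
      using K0 cr1[OF z z0] by (auto simp: lipschitz_on_def dist_real_def)
    then have l: "Lip \<Omega> ?f \<le> C * lam ^ n * ?L" by (rule Lip_le)
    have s: "supnorm \<Omega> ?f \<le> C * lam ^ n * ?L * diameter \<Omega>"
      unfolding supnorm_def using ne cr2[OF z z0] by (intro cSup_least) auto
    have "supnorm \<Omega> ?f + Lip \<Omega> ?f \<le> C * lam ^ n * ?L * diameter \<Omega> + C * lam ^ n * ?L"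
      using l s by simp
    also have "\<dots> = (1 + diameter \<Omega>) * C * ?L * lam ^ n" by (simp add: algebra_simps)
    finally show ?thesis .
  qed
  have part2: "\<exists>c. \<forall>x\<in>\<Omega>. g x = c * h x"
    if gpos: "\<forall>x\<in>\<Omega>. 0 < g x" and gl: "\<exists>L. L-lipschitz_on \<Omega> g"
      and geig: "\<forall>x\<in>\<Omega>. transfer F A g x = \<rho> * g x" for g
  proof -
    obtain Lg where Lg: "Lg-lipschitz_on \<Omega> g" using gl by auto
    obtain Lh where Lh: "Lh-lipschitz_on \<Omega> h" using h_lip by auto
    have gc: "continuous_on \<Omega> g" by (rule lipschitz_on_continuous_on[OF Lg])
    have hc: "continuous_on \<Omega> h" by (rule lipschitz_on_continuous_on[OF Lh])
    obtain xm where xm: "xm \<in> \<Omega>" "\<And>y. y \<in> \<Omega> \<Longrightarrow> h xm \<le> h y"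
      using continuous_attains_inf[OF compact ne hc] by auto
    define m where "m = h xm"
    have m: "0 < m" "\<And>y. y \<in> \<Omega> \<Longrightarrow> m \<le> h y" using xm hpos unfolding m_def by auto
    have "bounded (g ` \<Omega>)" using compact_continuous_image[OF gc compact] by (rule compact_imp_bounded)
    then obtain G where G: "\<And>x. x \<in> \<Omega> \<Longrightarrow> norm (g x) \<le> G" unfolding bounded_iff by auto
    have "bounded (h ` \<Omega>)" using compact_continuous_image[OF hc compact] by (rule compact_imp_bounded)
    then obtain H where H: "\<And>x. x \<in> \<Omega> \<Longrightarrow> norm (h x) \<le> H" unfolding bounded_iff by auto
    have Lg0: "0 \<le> Lg" and Lh0: "0 \<le> Lh" using Lg Lh by (auto simp: lipschitz_on_def)
    have G0: "0 \<le> G" and H0: "0 \<le> H" using G[OF x0] H[OF x0] by auto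
    define \<psi> where "\<psi> = (\<lambda>x. g x / h x)"
    define K where "K = (Lg * H + G * Lh) / (m * m)"
    have K0: "0 \<le> K" unfolding K_def using Lg0 Lh0 G0 H0 m by simp
    have psil: "K-lipschitz_on \<Omega> \<psi>"
    proof -
      have "\<bar>\<psi> x - \<psi> y\<bar> \<le> K * dist x y" if x: "x \<in> \<Omega>" and y: "y \<in> \<Omega>" for x y
      proof -
        have hx: "m \<le> h x" and hy: "m \<le> h y" using m x y by auto
        have "\<psi> x - \<psi> y = ((g x - g y) * h y + g y * (h y - h x)) / (h x * h y)"
          unfolding \<psi>_def using hpos[OF x] hpos[OF y] by (simp add: field_simps)
        moreover have "\<bar>(g x - g y) * h y + g y * (h y - h x)\<bar> \<le> (Lg * H + G * Lh) * dist x y"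
        proof -
          have a: "\<bar>g x - g y\<bar> \<le> Lg * dist x y" using lipschitz_onD[OF Lg x y] by (simp add: dist_real_def)
          have b: "\<bar>h y - h x\<bar> \<le> Lh * dist x y" using lipschitz_onD[OF Lh y x] by (simp add: dist_real_def dist_commute)
          have c: "\<bar>h y\<bar> \<le> H" "\<bar>g y\<bar> \<le> G" using H[OF y] G[OF y] by auto
          have "\<bar>(g x - g y) * h y\<bar> \<le> Lg * dist x y * H"
            unfolding abs_mult using a c by (intro mult_mono) auto
          moreover have "\<bar>g y * (h y - h x)\<bar> \<le> G * (Lh * dist x y)"
            unfolding abs_mult using b c G0 by (intro mult_mono) auto
          ultimately show ?thesis by (simp add: algebra_simps abs_triangle_ineq[THEN order_trans])
        qed
        moreover have "m * m \<le> h x * h y" using hx hy m by (intro mult_mono) auto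
        ultimately have "\<bar>\<psi> x - \<psi> y\<bar> \<le> (Lg * H + G * Lh) * dist x y / (m * m)"
        proof -
          assume e: "\<psi> x - \<psi> y = ((g x - g y) * h y + g y * (h y - h x)) / (h x * h y)"
            and n: "\<bar>(g x - g y) * h y + g y * (h y - h x)\<bar> \<le> (Lg * H + G * Lh) * dist x y"
            and d: "m * m \<le> h x * h y"
          have pos: "0 < h x * h y" using hpos[OF x] hpos[OF y] by simp
          have "\<bar>\<psi> x - \<psi> y\<bar> = \<bar>(g x - g y) * h y + g y * (h y - h x)\<bar> / (h x * h y)"
            using e pos by simp
          also have "\<dots> \<le> (Lg * H + G * Lh) * dist x y / (h x * h y)"
            using n pos by (intro divide_right_mono) auto
          also have "\<dots> \<le> (Lg * H + G * Lh) * dist x y / (m * m)"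
          proof (rule divide_left_mono[OF d])
            show "0 \<le> (Lg * H + G * Lh) * dist x y" using Lg0 Lh0 G0 H0 by simp
            show "0 < h x * h y * (m * m)" using pos m(1) by simp
          qed
          finally show ?thesis .
        qed
        then show ?thesis unfolding K_def by simp
      qed
      then show ?thesis using K0 by (auto simp: lipschitz_on_def dist_real_def)
    qed
    have Ppsi: "Pnorm F A \<rho> h \<psi> x = \<psi> x" if x: "x \<in> \<Omega>" for x
    proof -
      have "transfer F A (\<lambda>z. h z * \<psi> z) x = transfer F A g x"
        unfolding transfer_def
      proof (intro arg_cong[where f=sum_mset] image_mset_cong)
        fix z assume "z \<in># F x"
        then have "z \<in> \<Omega>" using Fsub[OF x] by blast
        then have "0 < h z" by (rule hpos)
        then show "exp (A z) * (h z * \<psi> z) = exp (A z) * g z" by (simp add: \<psi>_def)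
      qed
      then show ?thesis using geig x hpos[OF x] rpos by (simp add: Pnorm_def \<psi>_def)
    qed
    have Pnpsi: "(Pnorm F A \<rho> h ^^ n) \<psi> x = \<psi> x" if x: "x \<in> \<Omega>" for x n
      using x
    proof (induction n arbitrary: x)
      case 0 then show ?case by simp
    next
      case (Suc n)
      have "Pnorm F A \<rho> h ((Pnorm F A \<rho> h ^^ n) \<psi>) x = Pnorm F A \<rho> h \<psi> x"
        by (rule PcongE[OF Suc.prems]) (rule Suc.IH)
      then show ?case using Ppsi[OF Suc.prems] by simp
    qed
    define c where "c = (\<integral>x. \<psi> x \<partial>\<mu>)"
    define \<zeta> where "\<zeta> = (\<lambda>x. \<psi> x - c)"
    have zl: "K-lipschitz_on \<Omega> \<zeta>" using psil unfolding \<zeta>_def by (auto simp: lipschitz_on_def dist_real_def)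
    have pm: "prob_space \<mu>" using mu unfolding prob_on_def by auto
    have ipsi: "integrable \<mu> \<psi>" by (rule int_cont[OF compact mu lipschitz_on_continuous_on[OF psil]])
    have z0: "(\<integral>x. \<zeta> x \<partial>\<mu>) = 0"
    proof -
      have ic: "integrable \<mu> (\<lambda>x. c)" using prob_fin[OF pm] by (rule finite_measure.integrable_const)
      have "(\<integral>x. \<zeta> x \<partial>\<mu>) = (\<integral>x. \<psi> x \<partial>\<mu>) - (\<integral>x. c \<partial>\<mu>)"
        unfolding \<zeta>_def by (rule Bochner_Integration.integral_diff[OF ipsi ic])
      also have "(\<integral>x. c \<partial>\<mu>) = c" using prob_space.prob_space[OF pm] by simp
      finally show ?thesis by (simp add: c_def)
    qed
    have "g x = c * h x" if x: "x \<in> \<Omega>" for x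
    proof -
      have "\<bar>\<psi> x - c\<bar> \<le> 0"
      proof (rule lim_zero[OF _ lam])
        fix n
        have "\<bar>(Pnorm F A \<rho> h ^^ n) \<zeta> x\<bar> \<le> C * lam ^ n * K * diameter \<Omega>" by (rule cr2[OF zl z0 x])
        moreover have "(Pnorm F A \<rho> h ^^ n) \<zeta> x = \<psi> x - c"
          unfolding \<zeta>_def using Pn_minusE[OF x] Pnpsi[OF x] by simp
        ultimately show "\<bar>\<psi> x - c\<bar> \<le> (C * K * diameter \<Omega>) * lam ^ n" by (simp add: mult_ac)
      qed
      then have "\<psi> x = c" by simp
      then show ?thesis using hpos[OF x] unfolding \<psi>_def by (simp add: field_simps)
    qed
    then show ?thesis by auto
  qed
  show ?thesis using part1 part2 by blast
qed


end
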